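(* Let $q,N\in\mathbb{N}$ with $q,N\ge1$ and $p\in(0,1)$. Choose $L\in\mathbb{N}$ and $\varepsilon>0$ with $$L\ge\frac{2nD(q+A+C+2)^n}{(1-p)C^n}\quad\text{and}\quad\varepsilon\le\frac1{2NL}.$$ If $s$ is chosen uniformly at random from $S=\frac1{NL}\{0,\dots,L-1\}^n$, then $\Pr\big(G(s)\cap H_{\mathrm{grid}}(\varepsilon)=\emptyset\big)\ge p$, where $G(s)=\{s+\frac1Nv:v\in\{0,\dots,qN-1\}^n\}$.
   Context: An $n$-dimensional infrastructure consists of a full-rank lattice $\Lambda\subset\mathbb{R}^n$, a finite non-empty set $X$, an injective map $d:X\to\mathbb{R}^n/\Lambda$, and a set $\mathrm{fRep}\subseteq X\times\mathbb{R}^n$ with $X\times\{0\}\subseteq\mathrm{fRep}$ such that $\Phi:\mathrm{fRep}\to\mathbb{R}^n/\Lambda$, $(x,t)\mapsto d(x)+t$, is a bijection. Let $\pi:\mathbb{R}^n\to\mathbb{R}^n/\Lambda$ be the projection, $\hat X=\pi^{-1}(d(X))$, and for $\hat x\in\hat X$ let $\hat V_{\hat x}=\{\hat x+t:(d^{-1}(\pi(\hat x)),t)\in\mathrm{fRep}\}$; these sets partition $\mathbb{R}^n$. Standing assumptions: the infrastructure is cornered (for each $\hat x$, $\hat x\in\hat V_{\hat x}$ and $\{r:\hat x\le r\le t\}\subseteq\hat V_{\hat x}$ for all $t\in\hat V_{\hat x}$, componentwise order); (A1) there is $A>0$ with $\hat V_{\hat x}\subseteq\hat x+[0,A]^n$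 for all $\hat x$; (A2) there are $C,D>0$ such that $(r+[0,C]^n)\cap\hat X$ has at most $D$ elements for every $r\in\mathbb{R}^n$. $\mathbb{N}=\{0,1,2,\dots\}$, and $$H_{\mathrm{grid}}(\varepsilon)=\bigcup_{\hat x\in\hat X}\Big(\big(\tfrac1N\mathbb{N}^n+\partial\hat V_{\hat x}\big)\cap\overline{\hat V_{\hat x}}\Big)+[-\varepsilon,\varepsilon]^n,$$ with $\partial$ the topological boundary and $\overline{\,\cdot\,}$ the closure. *)

theory Defs
  imports "HOL-Analysis.Analysis"
begin

text \<open>Dimension n is the cardinality of the finite index type 'n; vectors are real^'n,
  ordered componentwise (the library order on real^'n).\<close>

definition lattice_of :: "real^'n^'n \<Rightarrow> (real^'n) set" where
  "lattice_of B = {B *v (\<chi> i. real_of_int (k $ i)) | k :: int^'n. True}"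

definition full_rank_lattice :: "(real^'n::finite) set \<Rightarrow> bool" where
  "full_rank_lattice \<Lambda> \<longleftrightarrow> (\<exists>B. invertible B \<and> \<Lambda> = lattice_of B)"

text \<open>The map d : X -> R^n/\<Lambda> is represented by a choice of representatives d x \<in> R^n;
  pi(a) = pi(b) iff a - b \<in> \<Lambda>.\<close>
definition infrastructure ::
  "(real^'n::finite) set \<Rightarrow> 'x set \<Rightarrow> ('x \<Rightarrow> real^'n) \<Rightarrow> ('x \<times> (real^'n)) set \<Rightarrow> bool" where
  "infrastructure \<Lambda> X d fRep \<longleftrightarrow>
     full_rank_lattice \<Lambda> \<and> finite X \<and> X \<noteq> {} \<and>
     (\<forall>x\<in>X. \<forall>y\<in>X. d x - d y \<in> \<Lambda> \<longrightarrow> x = y) \<and>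
     fRep \<subseteq> X \<times> UNIV \<and> X \<times> {0} \<subseteq> fRep \<and>
     (\<forall>x t x' t'. (x, t) \<in> fRep \<longrightarrow> (x', t') \<in> fRep \<longrightarrow>
         (d x + t) - (d x' + t') \<in> \<Lambda> \<longrightarrow> (x, t) = (x', t')) \<and>
     (\<forall>r. \<exists>(x, t) \<in> fRep. (d x + t) - r \<in> \<Lambda>)"

definition Xhat :: "(real^'n::finite) set \<Rightarrow> 'x set \<Rightarrow> ('x \<Rightarrow> real^'n) \<Rightarrow> (real^'n) set" where
  "Xhat \<Lambda> X d = {y. \<exists>x\<in>X. y - d x \<in> \<Lambda>}"

definition Vhat ::
  "(real^'n::finite) set \<Rightarrow> 'x set \<Rightarrow> ('x \<Rightarrow> real^'n) \<Rightarrow> ('x \<times> (real^'n)) set \<Rightarrow> real^'n \<Rightarrow> (real^'n) set" where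
  "Vhat \<Lambda> X d fRep xh = {xh + t | t. \<exists>x\<in>X. xh - d x \<in> \<Lambda> \<and> (x, t) \<in> fRep}"

definition cornered ::
  "(real^'n::finite) set \<Rightarrow> 'x set \<Rightarrow> ('x \<Rightarrow> real^'n) \<Rightarrow> ('x \<times> (real^'n)) set \<Rightarrow> bool" where
  "cornered \<Lambda> X d fRep \<longleftrightarrow>
     (\<forall>xh \<in> Xhat \<Lambda> X d. xh \<in> Vhat \<Lambda> X d fRep xh \<and>
        (\<forall>t \<in> Vhat \<Lambda> X d fRep xh. {r. xh \<le> r \<and> r \<le> t} \<subseteq> Vhat \<Lambda> X d fRep xh))"

definition grid :: "nat \<Rightarrow> (real^'n::finite) set" where
  "grid N = {(1 / real N) *\<^sub>R (\<chi> i. real (k $ i)) | k :: nat^'n. True}"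

definition cube :: "real \<Rightarrow> (real^'n::finite) set" where
  "cube e = {v. \<forall>i. \<bar>v $ i\<bar> \<le> e}"

definition H_grid ::
  "(real^'n::finite) set \<Rightarrow> 'x set \<Rightarrow> ('x \<Rightarrow> real^'n) \<Rightarrow> ('x \<times> (real^'n)) set \<Rightarrow> nat \<Rightarrow> real \<Rightarrow> (real^'n) set" where
  "H_grid \<Lambda> X d fRep N e =
     {h + w | h w. h \<in> (\<Union>xh \<in> Xhat \<Lambda> X d.
         {a + b | a b. a \<in> grid N \<and> b \<in> frontier (Vhat \<Lambda> X d fRep xh)}
           \<inter> closure (Vhat \<Lambda> X d fRep xh)) \<and> w \<in> cube e}"

definition sample_set :: "nat \<Rightarrow> nat \<Rightarrow> (real^'n::finite) set" where
  "sample_set N L = {(1 / (real N * real L)) *\<^sub>R (\<chi> i. real (k $ i)) | k :: nat^'n. \<forall>i. k $ i < L}"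

definition G_set :: "nat \<Rightarrow> nat \<Rightarrow> real^'n::finite \<Rightarrow> (real^'n) set" where
  "G_set q N s = {s + (1 / real N) *\<^sub>R (\<chi> i. real (v $ i)) | v :: nat^'n. \<forall>i. v $ i < q * N}"

end

theory Submission
  imports Defs "HOL-Library.FuncSet"
begin


lemma lattice_diff:
  assumes "full_rank_lattice \<Lambda>" "x \<in> \<Lambda>" "y \<in> \<Lambda>"
  shows "x - y \<in> \<Lambda>"
proof -
  obtain B where B: "\<Lambda> = lattice_of B" using assms(1) unfolding full_rank_lattice_def by blast
  obtain k where k: "x = B *v (\<chi> i. real_of_int (k $ i))" using assms(2) B unfolding lattice_of_def by blast
  obtain k' where k': "y = B *v (\<chi> i. real_of_int (k' $ i))" using assms(3) B unfolding lattice_of_def by blast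
  have "(\<chi> i. real_of_int (k $ i)) - (\<chi> i. real_of_int (k' $ i)) = (\<chi> i. real_of_int ((k - k') $ i))"
    by (simp add: vec_eq_iff)
  hence "x - y = B *v (\<chi> i. real_of_int ((k - k') $ i))"
    unfolding k k' by (metis matrix_vector_mult_diff_distrib)
  thus ?thesis unfolding B lattice_of_def by blast
qed

lemma lattice_zero:
  assumes "full_rank_lattice \<Lambda>" shows "0 \<in> \<Lambda>"
proof -
  obtain B where B: "\<Lambda> = lattice_of B" using assms(1) unfolding full_rank_lattice_def by blast
  have "(0::real^_) = B *v (\<chi> i. real_of_int ((0::int^_) $ i))" by (simp add: vec_eq_iff matrix_vector_mult_def)
  thus ?thesis unfolding B lattice_of_def by blast
qed

lemma lattice_neg:
  assumes "full_rank_lattice \<Lambda>" "x \<in> \<Lambda>" shows "- x \<in> \<Lambda>"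
  using lattice_diff[OF assms(1) lattice_zero[OF assms(1)] assms(2)] by simp

lemma card_vec_box:
  assumes "\<And>i. finite (B i)"
  shows "card {k :: 'a^'n::finite. \<forall>i. k $ i \<in> B i} = (\<Prod>i\<in>UNIV. card (B i))"
proof -
  have eq: "{k :: 'a^'n. \<forall>i. k $ i \<in> B i} = vec_lambda ` (PiE UNIV B)"
  proof (rule set_eqI, rule iffI)
    fix k :: "'a^'n" assume "k \<in> {k. \<forall>i. k $ i \<in> B i}"
    hence "vec_nth k \<in> PiE UNIV B" by (auto simp: PiE_def extensional_def)
    thus "k \<in> vec_lambda ` PiE UNIV B" by (metis image_eqI vec_nth_inverse)
  qed auto
  have "inj_on vec_lambda (PiE UNIV B :: ('n \<Rightarrow> 'a) set)"
    by (rule inj_onI) (metis vec_lambda_inverse UNIV_I)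
  hence "card {k :: 'a^'n. \<forall>i. k $ i \<in> B i} = card (PiE UNIV B)"
    unfolding eq by (rule card_image)
  also have "\<dots> = (\<Prod>i\<in>UNIV. card (B i))" by (simp add: card_PiE)
  finally show ?thesis .
qed



locale infra_setup =
  fixes \<Lambda> :: "(real^'n::finite) set" and X :: "'x set" and d :: "'x \<Rightarrow> real^'n"
    and fRep :: "('x \<times> (real^'n)) set" and A C D :: real
  assumes infra: "infrastructure \<Lambda> X d fRep"
    and corner: "cornered \<Lambda> X d fRep"
    and Apos: "A > 0"
    and A1: "\<forall>xh \<in> Xhat \<Lambda> X d. Vhat \<Lambda> X d fRep xh \<subseteq> {xh + t | t. \<forall>i. 0 \<le> t $ i \<and> t $ i \<le> A}"
    and Cpos: "C > 0" and Dpos: "D > 0"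
    and A2: "\<forall>r::real^'n. finite ({r + t | t. \<forall>i. 0 \<le> t $ i \<and> t $ i \<le> C} \<inter> Xhat \<Lambda> X d) \<and>
          real (card ({r + t | t. \<forall>i. 0 \<le> t $ i \<and> t $ i \<le> C} \<inter> Xhat \<Lambda> X d)) \<le> D"
begin

abbreviation "XH \<equiv> Xhat \<Lambda> X d"
abbreviation "V \<equiv> Vhat \<Lambda> X d fRep"

lemma lat: "full_rank_lattice \<Lambda>" using infra unfolding infrastructure_def by blast

lemma V_in_XH: "r \<in> V y \<Longrightarrow> y \<in> XH"
  unfolding Vhat_def Xhat_def by blast

lemma infra_parts:
  "finite X" "fRep \<subseteq> X \<times> UNIV" "X \<times> {0} \<subseteq> fRep"
  "\<And>x t x' t'. (x, t) \<in> fRep \<Longrightarrow> (x', t') \<in> fRep \<Longrightarrow>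
         (d x + t) - (d x' + t') \<in> \<Lambda> \<Longrightarrow> (x, t) = (x', t')"
  "\<And>r. \<exists>(x, t) \<in> fRep. (d x + t) - r \<in> \<Lambda>"
  using infra unfolding infrastructure_def by (simp_all only:)

lemma cover: "\<exists>y. r \<in> V y"
proof -
  obtain x t where xt: "(x, t) \<in> fRep" "(d x + t) - r \<in> \<Lambda>"
    using infra_parts(5)[of r] by auto
  have x: "x \<in> X" using xt(1) infra_parts(2) by auto
  have eq: "(r - t) - d x = - ((d x + t) - r)" by (simp add: algebra_simps)
  have "(r - t) - d x \<in> \<Lambda>" unfolding eq by (rule lattice_neg[OF lat xt(2)])
  hence "r \<in> V (r - t)" unfolding Vhat_def using x xt(1) by (auto intro!: exI[of _ t])
  thus ?thesis by blast
qed

lemma disj: assumes "r \<in> V y" "r \<in> V y'" shows "y = y'"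
proof -
  obtain t x where 1: "r = y + t" "x \<in> X" "y - d x \<in> \<Lambda>" "(x, t) \<in> fRep"
    using assms(1) unfolding Vhat_def by blast
  obtain t' x' where 2: "r = y' + t'" "x' \<in> X" "y' - d x' \<in> \<Lambda>" "(x', t') \<in> fRep"
    using assms(2) unfolding Vhat_def by blast
  have eq: "(d x + t) - (d x' + t') = (y' - d x') - (y - d x)" using 1(1) 2(1)
    by (simp add: algebra_simps)
  have "(d x + t) - (d x' + t') \<in> \<Lambda>" unfolding eq using lattice_diff[OF lat 2(3) 1(3)] .
  hence "(x, t) = (x', t')" using infra_parts(4) 1(4) 2(4) by blast
  hence "t = t'" by simp
  thus ?thesis using 1(1) 2(1) by (metis add_right_cancel)
qed

lemma corner_down: assumes "t \<in> V y" "y \<le> r" "r \<le> t" shows "r \<in> V y"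
  using corner V_in_XH[OF assms(1)] assms unfolding cornered_def by blast

lemma corner_self: assumes "y \<in> XH" shows "y \<in> V y"
  using corner assms unfolding cornered_def by blast

lemma V_box: assumes "z \<in> V y" shows "y \<le> z" "z \<le> y + (\<chi> i. A)"
proof -
  have "z \<in> {y + t | t. \<forall>i. 0 \<le> t $ i \<and> t $ i \<le> A}" using A1 V_in_XH[OF assms] assms by blast
  then obtain t where "z = y + t" "\<forall>i. 0 \<le> t $ i \<and> t $ i \<le> A" by blast
  thus "y \<le> z" "z \<le> y + (\<chi> i. A)" unfolding less_eq_vec_def by auto
qed

lemma closure_box: assumes "z \<in> closure (V y)" shows "y \<le> z" "z \<le> y + (\<chi> i. A)"
proof -
  have sub: "V y \<subseteq> {w. y \<le> w \<and> w \<le> y + (\<chi> i. A)}" using V_box by blast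
  have "{w. y \<le> w \<and> w \<le> y + (\<chi> i. A)} = cbox y (y + (\<chi> i. A))"
    using interval_cbox_cart[of y "y + (\<chi> i. A)"] by (simp add: atLeastAtMost_def atLeast_def atMost_def Collect_conj_eq)
  hence "closed {w. y \<le> w \<and> w \<le> y + (\<chi> i. A)}" by (metis closed_cbox)
  hence "closure (V y) \<subseteq> {w. y \<le> w \<and> w \<le> y + (\<chi> i. A)}" using sub closure_minimal by blast
  hence "z \<in> {w. y \<le> w \<and> w \<le> y + (\<chi> i. A)}" using assms by (rule subsetD)
  hence "y \<le> z \<and> z \<le> y + (\<chi> i. A)" by (simp only: mem_Collect_eq)
  thus "y \<le> z" "z \<le> y + (\<chi> i. A)" by simp_all
qed

end


context infra_setup begin

definition cubeC :: "real^'n \<Rightarrow> (real^'n) set" where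
  "cubeC s = {s + t | t. \<forall>i. 0 \<le> t $ i \<and> t $ i \<le> C}"

lemma cover_index:
  fixes W :: real and t :: real
  assumes W: "W > 0" and t: "0 \<le> t" "t \<le> W"
  defines "M \<equiv> nat \<lceil>W / C\<rceil>"
  shows "\<exists>k::nat. k < M \<and> 0 \<le> t - C * real k \<and> t - C * real k \<le> C"
proof -
  have C: "C > 0" using Cpos .
  have M1: "real M \<ge> W / C" unfolding M_def by linarith
  have M2: "real M < W / C + 1" unfolding M_def using W C by (simp add: of_nat_nat) linarith
  have "0 < \<lceil>W / C\<rceil>" using W C by simp
  hence Mpos: "M \<ge> 1" unfolding M_def by linarith
  show ?thesis
  proof (cases "nat \<lfloor>t / C\<rfloor> < M")
    case True
    define k where "k = nat \<lfloor>t / C\<rfloor>"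
    have fl: "real k = of_int \<lfloor>t / C\<rfloor>" unfolding k_def using t C by simp
    have "real k \<le> t / C" "t / C < real k + 1" using fl by linarith+
    hence "C * real k \<le> t" "t < C * real k + C" using C by (simp_all add: field_simps)
    thus ?thesis using True k_def by (intro exI[of _ k]) auto
  next
    case False
    hence "int M \<le> \<lfloor>t / C\<rfloor>" using Mpos by (cases "0 \<le> \<lfloor>t / C\<rfloor>") (simp_all add: not_less le_nat_iff)
    hence "real_of_int (int M) \<le> t / C" by (simp only: le_floor_iff)
    hence "real M \<le> t / C" by simp
    hence "C * real M \<le> t" using C by (simp add: field_simps)
    moreover have "W \<le> C * real M" using M1 C by (simp add: field_simps)
    moreover have "C * real M < W + C" using M2 C by (simp add: field_simps)
    ultimately have "0 \<le> t - C * real (M - 1) \<and> t - C * real (M - 1) \<le> C"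
      using Mpos t by (simp add: of_nat_diff algebra_simps)
    thus ?thesis using Mpos by (intro exI[of _ "M - 1"]) auto
  qed
qed


lemma box_count:
  fixes W :: real and r :: "real^'n"
  assumes W: "W > 0"
  defines "B \<equiv> {r + t | t. \<forall>i. 0 \<le> t $ i \<and> t $ i \<le> W} \<inter> XH"
  shows "finite B \<and> real (card B) \<le> D * real (nat \<lceil>W / C\<rceil>) ^ CARD('n)"
proof -
  define M where "M = nat \<lceil>W / C\<rceil>"
  have "0 < \<lceil>W / C\<rceil>" using W Cpos by simp
  hence Mpos: "M \<ge> 1" unfolding M_def by linarith
  define K where "K = {k::nat^'n. \<forall>i. k $ i \<in> {..<M}}"
  have cardK: "card K = M ^ CARD('n)"
    unfolding K_def by (subst card_vec_box) (simp_all add: prod_constant)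
  hence finK: "finite K" using Mpos by (intro card_ge_0_finite) simp
  define S where "S k = cubeC (r + C *\<^sub>R (\<chi> i. real (k $ i))) \<inter> XH" for k :: "nat^'n"
  have sub: "B \<subseteq> (\<Union>k\<in>K. S k)"
  proof
    fix z assume "z \<in> B"
    then obtain t where z: "z = r + t" "\<forall>i. 0 \<le> t $ i \<and> t $ i \<le> W" "z \<in> XH"
      unfolding B_def by blast
    have "\<forall>i. \<exists>k::nat. k < M \<and> 0 \<le> t $ i - C * real k \<and> t $ i - C * real k \<le> C"
      using cover_index[OF W] z(2) unfolding M_def by blast
    then obtain kf where kf: "\<forall>i. kf i < M \<and> 0 \<le> t $ i - C * real (kf i) \<and> t $ i - C * real (kf i) \<le> C"
      by metis
    define k where "k = (\<chi> i. kf i)"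
    have kK: "k \<in> K" unfolding K_def k_def using kf by simp
    have "z = (r + C *\<^sub>R (\<chi> i. real (k $ i))) + (t - C *\<^sub>R (\<chi> i. real (k $ i)))"
      using z(1) by simp
    moreover have "\<forall>i. 0 \<le> (t - C *\<^sub>R (\<chi> i. real (k $ i))) $ i \<and> (t - C *\<^sub>R (\<chi> i. real (k $ i))) $ i \<le> C"
      using kf unfolding k_def by simp
    ultimately have "z \<in> cubeC (r + C *\<^sub>R (\<chi> i. real (k $ i)))" unfolding cubeC_def by blast
    thus "z \<in> (\<Union>k\<in>K. S k)" using kK z(3) unfolding S_def by blast
  qed
  have finS: "\<And>k. finite (S k)" and cardS: "\<And>k. real (card (S k)) \<le> D"
    using A2 unfolding S_def cubeC_def by blast+
  have finU: "finite (\<Union>k\<in>K. S k)" using finK finS by blast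
  have "real (card B) \<le> real (card (\<Union>k\<in>K. S k))" using card_mono[OF finU sub] by simp
  also have "\<dots> \<le> real (\<Sum>k\<in>K. card (S k))" using card_UN_le[OF finK, of S] by linarith
  also have "\<dots> = (\<Sum>k\<in>K. real (card (S k)))" by simp
  also have "\<dots> \<le> (\<Sum>k\<in>K. D)" by (rule sum_mono) (rule cardS)
  also have "\<dots> = D * real M ^ CARD('n)" using cardK by simp
  finally show ?thesis using finite_subset[OF sub finU] unfolding M_def by simp
qed
end


context infra_setup begin

lemma geom:
  assumes xh: "xh \<in> XH" and hcl: "h \<in> closure (V xh)"
    and hab: "h = a + b" "a \<in> grid N" "b \<in> frontier (V xh)"
  shows "\<exists>y\<in>XH. y \<le> h \<and> h \<le> y + (\<chi> i. A) \<and> (\<exists>j. \<exists>m::nat. h$j - y$j = real m / real N)"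
proof -
  have hx1: "xh \<le> h" and hx2: "h \<le> xh + (\<chi> i. A)" using closure_box[OF hcl] by auto
  obtain ka :: "nat^'n" where ka: "a = (1 / real N) *\<^sub>R (\<chi> i. real (ka $ i))"
    using hab(2) unfolding grid_def by blast
  have acomp: "\<And>i. a $ i = real (ka $ i) / real N" using ka by simp
  have anonneg: "\<And>i. a $ i \<ge> 0" using acomp by simp
  show ?thesis
  proof (cases "\<exists>j. h $ j = xh $ j")
    case True
    then obtain j where "h $ j = xh $ j" by blast
    hence "h $ j - xh $ j = real 0 / real N" by simp
    thus ?thesis using xh hx1 hx2 by blast
  next
    case False
    hence hgt: "\<And>j. xh $ j < h $ j" using hx1 unfolding less_eq_vec_def
      by (metis order_le_imp_less_or_eq)
    show ?thesis
    proof (cases "\<exists>\<delta>>0. h + (\<chi> i. \<delta>) \<in> V xh")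
      case True
      then obtain \<delta> where \<delta>: "\<delta> > 0" "h + (\<chi> i. \<delta>) \<in> V xh" by blast
      have bcl: "b \<in> closure (V xh)" using hab(3) unfolding frontier_def by blast
      have bint: "b \<notin> interior (V xh)" using hab(3) unfolding frontier_def by blast
      have bx: "xh \<le> b" using closure_box[OF bcl] by simp
      have bh: "\<And>i. b $ i \<le> h $ i" using hab(1) anonneg by simp
      have "\<exists>j. b $ j = xh $ j"
      proof (rule ccontr)
        assume "\<not> (\<exists>j. b $ j = xh $ j)"
        hence bgt: "\<And>j. xh $ j < b $ j" using bx unfolding less_eq_vec_def
          by (metis order_le_imp_less_or_eq)
        have "b $ i < h $ i + \<delta>" for i using bh[of i] \<delta>(1) by linarith
        hence "b \<in> box xh (h + (\<chi> i. \<delta>))" unfolding mem_box_cart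
          using bgt by simp
        moreover have "box xh (h + (\<chi> i. \<delta>)) \<subseteq> V xh"
        proof
          fix r assume "r \<in> box xh (h + (\<chi> i. \<delta>))"
          hence "\<And>i. xh $ i < r $ i \<and> r $ i < (h + (\<chi> i. \<delta>)) $ i" unfolding mem_box_cart by blast
          hence "xh \<le> r" "r \<le> h + (\<chi> i. \<delta>)" unfolding less_eq_vec_def by (auto intro: less_imp_le)
          thus "r \<in> V xh" using corner_down[OF \<delta>(2)] by blast
        qed
        ultimately have "b \<in> interior (V xh)" using open_box by (rule interiorI[rotated])
        thus False using bint by blast
      qed
      then obtain j where j: "b $ j = xh $ j" by blast
      have "h $ j - xh $ j = real (ka $ j) / real N" using hab(1) j acomp by simp
      thus ?thesis using xh hx1 hx2 by blast
    next
      case False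
      hence notin: "\<And>\<delta>. \<delta> > 0 \<Longrightarrow> h + (\<chi> i. \<delta>) \<notin> V xh" by blast
      define F where "F = {(h - (\<chi> i. A)) + t | t. \<forall>i. 0 \<le> t $ i \<and> t $ i \<le> A + 1} \<inter> XH"
      have finF: "finite F" using box_count[of "A + 1" "h - (\<chi> i. A)"] Apos unfolding F_def by simp
      define \<Gamma> where "\<Gamma> = {y $ k - h $ k | y k. y \<in> F \<and> h $ k < y $ k}"
      have "\<Gamma> \<subseteq> (\<lambda>(y, k). y $ k - h $ k) ` (F \<times> UNIV)" unfolding \<Gamma>_def by force
      moreover have "finite (F \<times> (UNIV :: 'n set))" using finF by simp
      ultimately have finG: "finite \<Gamma>" using finite_subset by blast
      have Gpos: "\<And>g. g \<in> \<Gamma> \<Longrightarrow> g > 0" unfolding \<Gamma>_def by auto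
      define \<delta> where "\<delta> = (if \<Gamma> = {} then 1 else min 1 (Min \<Gamma> / 2))"
      have dpos: "\<delta> > 0" unfolding \<delta>_def using Gpos finG by auto
      have dle1: "\<delta> \<le> 1" unfolding \<delta>_def by auto
      have dlt: "\<And>g. g \<in> \<Gamma> \<Longrightarrow> \<delta> < g"
      proof -
        fix g assume g: "g \<in> \<Gamma>"
        hence "\<Gamma> \<noteq> {}" by blast
        hence "\<delta> \<le> Min \<Gamma> / 2" unfolding \<delta>_def by simp
        moreover have "Min \<Gamma> \<le> g" using finG g by simp
        moreover have "Min \<Gamma> > 0" using finG g Gpos \<open>\<Gamma> \<noteq> {}\<close> by simp
        ultimately show "\<delta> < g" by linarith
      qed
      define p where "p = h + (\<chi> i. \<delta>)"
      obtain y where py: "p \<in> V y" using cover by blast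
      have yXH: "y \<in> XH" using V_in_XH[OF py] .
      have yp1: "\<And>i. y $ i \<le> h $ i + \<delta>" using V_box(1)[OF py] unfolding p_def less_eq_vec_def by simp
      have yp2: "\<And>i. h $ i + \<delta> \<le> y $ i + A" using V_box(2)[OF py] unfolding p_def less_eq_vec_def by simp
      have yF: "y \<in> F"
      proof -
        have "y = (h - (\<chi> i. A)) + (y - (h - (\<chi> i. A)))" by simp
        moreover have "\<forall>i. 0 \<le> (y - (h - (\<chi> i. A))) $ i \<and> (y - (h - (\<chi> i. A))) $ i \<le> A + 1"
        proof
          fix i show "0 \<le> (y - (h - (\<chi> i. A))) $ i \<and> (y - (h - (\<chi> i. A))) $ i \<le> A + 1"
            using yp1[of i] yp2[of i] dpos dle1 by simp
        qed
        ultimately show ?thesis unfolding F_def using yXH by blast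
      qed
      have yh: "\<And>k. y $ k \<le> h $ k"
      proof (rule ccontr)
        fix k assume "\<not> y $ k \<le> h $ k"
        hence "y $ k - h $ k \<in> \<Gamma>" unfolding \<Gamma>_def using yF by force
        hence "\<delta> < y $ k - h $ k" by (rule dlt)
        thus False using yp1[of k] by linarith
      qed
      have yne: "y \<noteq> xh" using notin[OF dpos] py unfolding p_def by blast
      have "\<exists>j. y $ j = h $ j"
      proof (rule ccontr)
        assume "\<not> (\<exists>j. y $ j = h $ j)"
        hence ylt: "\<And>j. y $ j < h $ j" using yh by (metis order_le_imp_less_or_eq)
        define \<eta> where "\<eta> = Min (range (\<lambda>j. min (h $ j - y $ j) (h $ j - xh $ j)))"
        have etapos: "\<eta> > 0" unfolding \<eta>_def using ylt hgt by simp
        have etamin: "\<eta> \<le> min (h $ j - y $ j) (h $ j - xh $ j)" for j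
          unfolding \<eta>_def by (rule Min_le) simp_all
        have etale: "\<And>j. \<eta> \<le> h $ j - y $ j" "\<And>j. \<eta> \<le> h $ j - xh $ j"
          using etamin by simp_all
        obtain z where z: "z \<in> V xh" "dist z h < \<eta>"
          using hcl etapos unfolding closure_approachable by blast
        have zc: "\<And>i. h $ i - \<eta> < z $ i"
        proof -
          fix i
          have "\<bar>(z - h) $ i\<bar> \<le> norm (z - h)" by (rule component_le_norm_cart)
          thus "h $ i - \<eta> < z $ i" using z(2) by (simp add: dist_norm)
        qed
        define r where "r = h - (\<chi> i. \<eta>)"
        have "xh \<le> r" "r \<le> z" unfolding r_def less_eq_vec_def
          using etale(2) zc by (auto simp: less_imp_le algebra_simps)
        hence r1: "r \<in> V xh" using corner_down[OF z(1)] by blast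
        have "y \<le> r" "r \<le> p" unfolding r_def p_def less_eq_vec_def
          using etale(1) etapos dpos by (auto simp: algebra_simps)
        hence r2: "r \<in> V y" using corner_down[OF py] by blast
        show False using disj[OF r1 r2] yne by simp
      qed
      then obtain j where j: "y $ j = h $ j" by blast
      hence "h $ j - y $ j = real 0 / real N" by simp
      moreover have "y \<le> h" using yh unfolding less_eq_vec_def by blast
      moreover have "h $ i \<le> y $ i + A" for i using yp2[of i] dpos by linarith
      hence "h \<le> y + (\<chi> i. A)" unfolding less_eq_vec_def by simp
      ultimately show ?thesis using yXH by blast
    qed
  qed
qed

end


lemma residue_two:
  fixes k L N :: nat and c e :: real and m :: int
  assumes kL: "k < L" and N: "N \<ge> 1" and e: "e \<le> 1 / (2 * real N * real L)"
    and close: "\<bar>real k / (real N * real L) - c - real_of_int m / real N\<bar> \<le> e"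
  shows "k \<in> {nat (\<lceil>c * N * L - 1/2\<rceil> mod int L), nat ((\<lceil>c * N * L - 1/2\<rceil> + 1) mod int L)}"
proof -
  define u0 where "u0 = \<lceil>c * N * L - 1/2\<rceil>"
  define u where "u = int k - m * int L"
  have Lpos: "real L > 0" using kL by simp
  have Npos: "real N > 0" using N by simp
  have NL: "real N * real L > 0" using Lpos Npos by simp
  have "\<bar>real k / (real N * real L) - c - real_of_int m / real N\<bar> * (real N * real L) \<le> e * (real N * real L)"
    using close NL by (simp add: mult_right_mono)
  also have "e * (real N * real L) \<le> 1/2" using e NL by (simp add: field_simps)
  also have "\<bar>real k / (real N * real L) - c - real_of_int m / real N\<bar> * (real N * real L)
      = \<bar>real k - c * N * L - real_of_int m * L\<bar>"
  proof -
    have "(real k / (real N * real L) - c - real_of_int m / real N) * (real N * real L)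
        = real k - c * N * L - real_of_int m * L" using Npos Lpos by (simp add: field_simps)
    thus ?thesis using NL by (metis abs_mult abs_of_pos)
  qed
  finally have ineq: "\<bar>real_of_int u - c * N * L\<bar> \<le> 1/2" unfolding u_def by (simp add: algebra_simps)
  have "c * N * L - 1/2 \<le> real_of_int u" using ineq by linarith
  hence "u0 \<le> u" unfolding u0_def by (simp add: ceiling_le_iff)
  moreover have "real_of_int u0 \<ge> c * N * L - 1/2" unfolding u0_def by linarith
  hence "u \<le> u0 + 1" using ineq by linarith
  ultimately have "u = u0 \<or> u = u0 + 1" by linarith
  moreover have "int k = u mod int L"
  proof -
    have "u mod int L = (int k + (- m) * int L) mod int L" unfolding u_def by simp
    also have "\<dots> = int k mod int L" by (rule mod_mult_self1)
    also have "\<dots> = int k" using kL by simp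
    finally show ?thesis by simp
  qed
  ultimately show ?thesis unfolding u0_def by auto
qed



context infra_setup begin

lemma bad_char:
  fixes q N L :: nat and e :: real and s :: "real^'n"
  assumes N: "N \<ge> 1" and e: "e > 0"
    and s: "s \<in> sample_set N L" and ne: "G_set q N s \<inter> H_grid \<Lambda> X d fRep N e \<noteq> {}"
  shows "\<exists>y \<in> {(\<chi> i. -(e + A)) + t | t. \<forall>i. 0 \<le> t $ i \<and> t $ i \<le> real q + A + 2 * e} \<inter> XH.
           \<exists>j. \<exists>m::int. \<bar>s $ j - y $ j - real_of_int m / real N\<bar> \<le> e"
proof -
  have Npos: "real N > 0" using N by simp
  obtain k :: "nat^'n" where k: "s = (1 / (real N * real L)) *\<^sub>R (\<chi> i. real (k $ i))" "\<forall>i. k $ i < L"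
    using s unfolding sample_set_def by blast
  have scomp: "\<And>i. s $ i = real (k $ i) / (real N * real L)" using k(1) by simp
  have s0: "\<And>i. 0 \<le> s $ i" using scomp by simp
  have s1: "\<And>i. s $ i < 1 / real N"
  proof -
    fix i
    have L: "real L > 0" using k(2) by (metis of_nat_0_less_iff gr_zeroI not_less0)
    have "real (k $ i) < real L" using k(2) by simp
    hence "real (k $ i) / (real N * real L) < real L / (real N * real L)"
      using Npos L by (intro divide_strict_right_mono) simp_all
    moreover have "real L / (real N * real L) = 1 / real N" using L by simp
    ultimately show "s $ i < 1 / real N" using scomp[of i] by simp
  qed
  obtain g where gG: "g \<in> G_set q N s" and gH: "g \<in> H_grid \<Lambda> X d fRep N e" using ne by blast
  obtain v :: "nat^'n" where v: "g = s + (1 / real N) *\<^sub>R (\<chi> i. real (v $ i))" "\<forall>i. v $ i < q * N"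
    using gG unfolding G_set_def by blast
  have gcomp: "\<And>i. g $ i = s $ i + real (v $ i) / real N" using v(1) by simp
  have g0: "\<And>i. 0 \<le> g $ i" using gcomp s0 by (simp add: add_nonneg_nonneg)
  have gq: "\<And>i. g $ i < real q"
  proof -
    fix i
    have "v $ i + 1 \<le> q * N" using v(2) by (simp add: Suc_le_eq)
    hence "real (v $ i) + 1 \<le> real q * real N" by (metis of_nat_1 of_nat_add of_nat_le_iff of_nat_mult)
    hence "real (v $ i) / real N + 1 / real N \<le> real q" using Npos by (simp add: field_simps)
    thus "g $ i < real q" using gcomp[of i] s1[of i] by linarith
  qed
  obtain h w where hw: "g = h + w" "w \<in> cube e"
    and hU: "h \<in> (\<Union>xh \<in> XH. {a + b | a b. a \<in> grid N \<and> b \<in> frontier (V xh)} \<inter> closure (V xh))"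
    using gH unfolding H_grid_def by blast
  obtain xh a b where xh: "xh \<in> XH" "h = a + b" "a \<in> grid N" "b \<in> frontier (V xh)" "h \<in> closure (V xh)"
    using hU by blast
  obtain y j m0 where y: "y \<in> XH" "y \<le> h" "h \<le> y + (\<chi> i. A)" "h $ j - y $ j = real m0 / real N"
    using geom[OF xh(1) xh(5) xh(2) xh(3) xh(4)] by blast
  have wc: "\<And>i. \<bar>w $ i\<bar> \<le> e" using hw(2) unfolding cube_def by blast
  have hcomp: "\<And>i. h $ i = g $ i - w $ i" using hw(1) by simp
  have yle: "\<And>i. y $ i \<le> h $ i" using y(2) unfolding less_eq_vec_def by blast
  have yge: "\<And>i. h $ i \<le> y $ i + A" using y(3) unfolding less_eq_vec_def by simp
  define t where "t = y - (\<chi> i. -(e + A))"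
  have "y = (\<chi> i. -(e + A)) + t" unfolding t_def by simp
  moreover have "\<forall>i. 0 \<le> t $ i \<and> t $ i \<le> real q + A + 2 * e"
  proof
    fix i
    have "t $ i = y $ i + e + A" unfolding t_def by simp
    moreover have "- e \<le> w $ i" "w $ i \<le> e" using wc[of i] by linarith+
    ultimately show "0 \<le> t $ i \<and> t $ i \<le> real q + A + 2 * e"
      using yle[of i] yge[of i] hcomp[of i] g0[of i] gq[of i] by linarith
  qed
  ultimately have yY: "y \<in> {(\<chi> i. -(e + A)) + t | t. \<forall>i. 0 \<le> t $ i \<and> t $ i \<le> real q + A + 2 * e} \<inter> XH"
    using y(1) by blast
  define m where "m = int m0 - int (v $ j)"
  have "s $ j - y $ j - real_of_int m / real N = w $ j"
  proof -
    have "real_of_int m / real N = real m0 / real N - real (v $ j) / real N"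
      unfolding m_def by (simp add: diff_divide_distrib)
    thus ?thesis using gcomp[of j] hcomp[of j] y(4) by linarith
  qed
  hence "\<bar>s $ j - y $ j - real_of_int m / real N\<bar> \<le> e" using wc[of j] by simp
  thus ?thesis using yY by blast
qed

end


lemma card_vec_one_special:
  fixes L :: nat and T :: "nat set" and j :: "'n::finite"
  assumes "finite T"
  shows "card {k :: nat^'n. \<forall>i. k $ i \<in> (if i = j then T else {..<L})} = card T * L ^ (CARD('n) - 1)"
proof -
  have "card {k :: nat^'n. \<forall>i. k $ i \<in> (if i = j then T else {..<L})}
      = (\<Prod>i\<in>UNIV. card (if i = j then T else {..<L}))"
    using assms by (intro card_vec_box) simp
  also have "\<dots> = card (if j = j then T else {..<L}) * (\<Prod>i\<in>UNIV - {j}. card (if i = j then T else {..<L}))"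
    by (rule prod.remove) simp_all
  also have "(\<Prod>i\<in>UNIV - {j}. card (if i = j then T else {..<L})) = (\<Prod>i\<in>UNIV - {j}. L)"
    by (rule prod.cong) auto
  also have "\<dots> = L ^ (CARD('n) - 1)" by (simp add: card_Diff_singleton)
  finally show ?thesis by simp
qed

context infra_setup begin

lemma main:
  fixes q N L :: nat and p e :: real
  assumes q: "q \<ge> 1" and N: "N \<ge> 1" and p: "0 < p" "p < 1"
    and L: "real L \<ge> 2 * real CARD('n) * D * (real q + A + C + 2) ^ CARD('n) / ((1 - p) * C ^ CARD('n))"
    and e: "e > 0" "e \<le> 1 / (2 * real N * real L)"
  shows "real (card {s \<in> sample_set N L. G_set q N s \<inter> H_grid \<Lambda> X d fRep N e = {}})
           / real (card (sample_set N L :: (real^'n) set)) \<ge> p"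
proof -
  define n where "n = CARD('n)"
  have n1: "n \<ge> 1" unfolding n_def by simp
  have Npos: "real N > 0" using N by simp
  have rhspos: "2 * real CARD('n) * D * (real q + A + C + 2) ^ CARD('n) / ((1 - p) * C ^ CARD('n)) > 0"
    using Dpos Apos Cpos p by (intro divide_pos_pos mult_pos_pos) simp_all
  hence Lpos: "real L > 0" using L by linarith
  hence L1: "L \<ge> 1" by simp
  define f where "f k = (1 / (real N * real L)) *\<^sub>R (\<chi> i. real (k $ i))" for k :: "nat^'n"
  define KL where "KL = {k :: nat^'n. \<forall>i. k $ i \<in> {..<L}}"
  define S where "S = (sample_set N L :: (real^'n) set)"
  have S_eq: "S = f ` KL" unfolding S_def sample_set_def f_def KL_def by auto
  have fcomp: "\<And>k i. f k $ i = real (k $ i) / (real N * real L)" unfolding f_def by simp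
  have injf: "inj_on f X'" for X'
  proof (rule inj_onI)
    fix k k' assume "f k = f k'"
    hence "\<And>i. real (k $ i) / (real N * real L) = real (k' $ i) / (real N * real L)"
      by (metis fcomp)
    hence "\<And>i. k $ i = k' $ i" using Npos Lpos by simp
    thus "k = k'" by (simp add: vec_eq_iff)
  qed
  have cardKL: "card KL = L ^ n" unfolding KL_def n_def by (subst card_vec_box) (simp_all add: prod_constant)
  have cardS: "card S = L ^ n" unfolding S_eq using card_image[OF injf] cardKL by simp
  have finS: "finite S" unfolding S_eq KL_def
    using card_vec_box[of "\<lambda>i. {..<L}"] cardKL L1 unfolding KL_def
    by (intro finite_imageI card_ge_0_finite) simp
  define W where "W = real q + A + 2 * e"
  have Wpos: "W > 0" unfolding W_def using Apos e by simp
  define Y where "Y = {(\<chi> i. -(e + A)) + t | t. \<forall>i. 0 \<le> t $ i \<and> t $ i \<le> W} \<inter> XH"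
  have Ybox: "finite Y \<and> real (card Y) \<le> D * real (nat \<lceil>W / C\<rceil>) ^ CARD('n)"
    unfolding Y_def by (rule box_count[OF Wpos])
  define Bj where "Bj y j = {s \<in> S. \<exists>m::int. \<bar>s $ j - y $ j - real_of_int m / real N\<bar> \<le> e}"
    for y :: "real^'n" and j :: 'n
  define Bad where "Bad = {s \<in> S. G_set q N s \<inter> H_grid \<Lambda> X d fRep N e \<noteq> {}}"
  have Bad_sub: "Bad \<subseteq> (\<Union>y\<in>Y. \<Union>j. Bj y j)"
  proof
    fix s assume "s \<in> Bad"
    hence sS: "s \<in> S" and ne: "G_set q N s \<inter> H_grid \<Lambda> X d fRep N e \<noteq> {}" unfolding Bad_def by auto
    obtain y j m where "y \<in> Y" "\<bar>s $ j - y $ j - real_of_int m / real N\<bar> \<le> e"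
      using bad_char[OF N e(1) sS[unfolded S_def] ne] unfolding Y_def W_def by blast
    thus "s \<in> (\<Union>y\<in>Y. \<Union>j. Bj y j)" unfolding Bj_def using sS by blast
  qed
  have cardBj: "card (Bj y j) \<le> 2 * L ^ (n - 1)" for y j
  proof -
    define u0 where "u0 = \<lceil>y $ j * N * L - 1/2\<rceil>"
    define T where "T = {nat (u0 mod int L), nat ((u0 + 1) mod int L)}"
    define KT where "KT = {k :: nat^'n. \<forall>i. k $ i \<in> (if i = j then T else {..<L})}"
    have "Bj y j \<subseteq> f ` KT"
    proof
      fix s assume "s \<in> Bj y j"
      then obtain k m where k: "k \<in> KL" "s = f k" "\<bar>s $ j - y $ j - real_of_int m / real N\<bar> \<le> e"
        unfolding Bj_def S_eq by blast
      have "k $ j \<in> T"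
        unfolding T_def u0_def
        by (rule residue_two[OF _ N e(2)]) (use k in \<open>auto simp: KL_def fcomp\<close>)
      hence "k \<in> KT" using k(1) unfolding KT_def KL_def by auto
      thus "s \<in> f ` KT" using k(2) by blast
    qed
    moreover have cardKT: "card KT = card T * L ^ (n - 1)" unfolding KT_def n_def
      by (rule card_vec_one_special) (simp add: T_def)
    moreover have "card T > 0" unfolding T_def by (simp add: card_gt_0_iff)
    ultimately have "finite KT" using L1 by (intro card_ge_0_finite) simp
    hence "card (Bj y j) \<le> card (f ` KT)"
      using \<open>Bj y j \<subseteq> f ` KT\<close> by (intro card_mono) simp_all
    also have "\<dots> = card KT" by (rule card_image[OF injf])
    also have "\<dots> = card T * L ^ (n - 1)" by (rule cardKT)
    also have "card T \<le> 2" unfolding T_def by (simp add: card_insert_le_m1)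
    hence "card T * L ^ (n - 1) \<le> 2 * L ^ (n - 1)" by simp
    finally show ?thesis .
  qed
  have finY: "finite Y" using Ybox by blast
  have finBj: "finite (Bj y j)" for y j using finS unfolding Bj_def by simp
  have finU: "finite (\<Union>y\<in>Y. \<Union>j. Bj y j)"
    using finY finBj by (intro finite_UN_I) simp_all
  have "card Bad \<le> card (\<Union>y\<in>Y. \<Union>j. Bj y j)"
    by (rule card_mono[OF finU Bad_sub])
  also have "\<dots> \<le> (\<Sum>y\<in>Y. card (\<Union>j. Bj y j))" by (rule card_UN_le[OF finY])
  also have "\<dots> \<le> (\<Sum>y\<in>Y. \<Sum>j\<in>UNIV. card (Bj y j))"
    by (intro sum_mono card_UN_le) simp
  also have "\<dots> \<le> (\<Sum>y\<in>Y. \<Sum>j\<in>(UNIV::'n set). 2 * L ^ (n - 1))"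
    by (intro sum_mono cardBj)
  also have "\<dots> = card Y * (n * (2 * L ^ (n - 1)))" unfolding n_def by simp
  finally have "real (card Bad) \<le> real (card Y * (n * (2 * L ^ (n - 1))))"
    by (simp only: of_nat_le_iff)
  hence cB: "real (card Bad) \<le> real (card Y) * (real n * (2 * real L ^ (n - 1)))"
    by simp
  define M where "M = nat \<lceil>W / C\<rceil>"
  have "NL1": "real N * real L \<ge> 1" using N L1 by (metis mult_le_mono of_nat_1 of_nat_le_iff of_nat_mult mult_1_right)
  have "e \<le> 1/2"
  proof -
    have "1 / (2 * real N * real L) \<le> 1 / 2" using NL1 by (simp add: field_simps)
    thus ?thesis using e(2) by linarith
  qed
  hence Wle: "W \<le> real q + A + 1" unfolding W_def by linarith
  have "real M \<le> W / C + 1" unfolding M_def using Wpos Cpos by (simp add: of_nat_nat)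
  also have "\<dots> \<le> (real q + A + 1) / C + 1" using Wle Cpos by (simp add: divide_right_mono)
  also have "\<dots> \<le> (real q + A + C + 2) / C" using Cpos by (simp add: field_simps)
  finally have Mle: "real M \<le> (real q + A + C + 2) / C" .
  have Mpow: "real M ^ n \<le> ((real q + A + C + 2) / C) ^ n" using Mle by (intro power_mono) simp_all
  have cY: "real (card Y) \<le> D * ((real q + A + C + 2) / C) ^ n"
  proof -
    have "real (card Y) \<le> D * real M ^ n" using Ybox unfolding M_def n_def by simp
    also have "\<dots> \<le> D * ((real q + A + C + 2) / C) ^ n" using Mpow Dpos by simp
    finally show ?thesis .
  qed
  have Lb: "2 * real n * D * ((real q + A + C + 2) / C) ^ n \<le> (1 - p) * real L"
  proof -
    have "2 * real n * D * ((real q + A + C + 2) / C) ^ n = 2 * real n * D * (real q + A + C + 2) ^ n / C ^ n"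
      by (simp add: power_divide)
    also have "\<dots> = (1 - p) * (2 * real n * D * (real q + A + C + 2) ^ n / ((1 - p) * C ^ n))"
    proof -
      have a: "1 - p \<noteq> 0" using p by simp
      have c: "C ^ n \<noteq> 0" using Cpos by simp
      show ?thesis using a c by (simp add: field_simps)
    qed
    also have "\<dots> \<le> (1 - p) * real L" using L p unfolding n_def by (intro mult_left_mono) simp_all
    finally show ?thesis .
  qed
  have "real (card Bad) \<le> D * ((real q + A + C + 2) / C) ^ n * (real n * (2 * real L ^ (n - 1)))"
    using cB cY by (rule order_trans[OF _ mult_right_mono]) simp
  also have "\<dots> = (2 * real n * D * ((real q + A + C + 2) / C) ^ n) * real L ^ (n - 1)" by simp
  also have "\<dots> \<le> ((1 - p) * real L) * real L ^ (n - 1)" using Lb by (intro mult_right_mono) simp_all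
  also have "\<dots> = (1 - p) * real L ^ n" using n1 by (simp add: power_eq_if)
  finally have cBad: "real (card Bad) \<le> (1 - p) * real L ^ n" .
  have good_eq: "{s \<in> S. G_set q N s \<inter> H_grid \<Lambda> X d fRep N e = {}} = S - Bad" unfolding Bad_def by auto
  have BS: "Bad \<subseteq> S" unfolding Bad_def by auto
  have finB: "finite Bad" using finite_subset[OF BS finS] .
  have "card (S - Bad) = card S - card Bad" using card_Diff_subset[OF finB BS] .
  moreover have "card Bad \<le> card S" using card_mono[OF finS BS] .
  ultimately have "real (card (S - Bad)) = real (card S) - real (card Bad)" by simp
  hence "real (card (S - Bad)) \<ge> p * real L ^ n" using cBad cardS by (simp add: algebra_simps)
  moreover have "real L ^ n > 0" using Lpos by simp
  ultimately have "real (card (S - Bad)) / real L ^ n \<ge> p" by (simp add: field_simps)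
  thus ?thesis using good_eq cardS unfolding S_def by simp
qed

end

theorem proposition4p2:
  fixes \<Lambda> :: "(real^'n::finite) set" and X :: "'x set" and d :: "'x \<Rightarrow> real^'n"
    and fRep :: "('x \<times> (real^'n)) set"
    and A C D :: real and q N L :: nat and p e :: real
  assumes infra: "infrastructure \<Lambda> X d fRep"
    and corner: "cornered \<Lambda> X d fRep"
    and A1: "A > 0" "\<forall>xh \<in> Xhat \<Lambda> X d. Vhat \<Lambda> X d fRep xh \<subseteq> {xh + t | t. \<forall>i. 0 \<le> t $ i \<and> t $ i \<le> A}"
    and A2: "C > 0" "D > 0"
      "\<forall>r::real^'n. finite ({r + t | t. \<forall>i. 0 \<le> t $ i \<and> t $ i \<le> C} \<inter> Xhat \<Lambda> X d) \<and>
          real (card ({r + t | t. \<forall>i. 0 \<le> t $ i \<and> t $ i \<le> C} \<inter> Xhat \<Lambda> X d)) \<le> D"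
    and q: "q \<ge> 1" and N: "N \<ge> 1" and p: "0 < p" "p < 1"
    and L: "real L \<ge> 2 * real CARD('n) * D * (real q + A + C + 2) ^ CARD('n) / ((1 - p) * C ^ CARD('n))"
    and e: "e > 0" "e \<le> 1 / (2 * real N * real L)"
  shows "real (card {s \<in> sample_set N L. G_set q N s \<inter> H_grid \<Lambda> X d fRep N e = {}})
           / real (card (sample_set N L :: (real^'n) set)) \<ge> p"
proof -
  interpret infra_setup \<Lambda> X d fRep A C D
    by (rule infra_setup.intro[OF infra corner A1(1) A1(2) A2(1) A2(2) A2(3)])
  show ?thesis by (rule main[OF q N p L e])
qed

end
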